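(* Let $\mathcal{H}$ be a finite-dimensional complex Hilbert space and $A,B$ linear operators on $\mathcal{H}$ with $\|A\|\le1$, $\|B\|\le1$ (operator norms), such that $1$ is an eigenvalue of $A$ and of $B$ and there is a nonzero $\rho_1\in\mathcal{H}$ with $A^*\rho_1=\rho_1$ and $B^*\rho_1=\rho_1$. Let $0<p,q<1$, $p+q=1$, and $\mathcal{L}=qA+pB$. If $\lambda=1$ is the only eigenvalue of $B$ with $|\lambda|=1$, then $\lambda=1$ is also the only eigenvalue of $\mathcal{L}$ with $|\lambda|=1$. *)

theory Defs
  imports "HOL-Analysis.Analysis"
begin

text \<open>The finite-dimensional complex Hilbert space is modelled as complex^'n with the
standard (Euclidean, l2) norm; operators are matrices complex^'n^'n acting by *v.\<close>

definition adjoint_mat :: "complex^'n^'n \<Rightarrow> complex^'n^'n" where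
  "adjoint_mat A = (\<chi> i j. cnj (A $ j $ i))"

definition is_eigenvalue :: "complex^'n^'n \<Rightarrow> complex \<Rightarrow> bool" where
  "is_eigenvalue A l \<longleftrightarrow> (\<exists>v. v \<noteq> 0 \<and> A *v v = l *s v)"

end

theory Submission imports Defs begin
lemma convex_id:
  fixes x y :: "'a::real_inner" and p q :: real
  assumes "p + q = 1"
  shows "(norm (q *\<^sub>R x + p *\<^sub>R y))\<^sup>2 = q * (norm x)\<^sup>2 + p * (norm y)\<^sup>2 - p * q * (norm (x - y))\<^sup>2"
proof -
  have 1: "(norm (q *\<^sub>R x + p *\<^sub>R y))\<^sup>2 = q*q*(x\<bullet>x) + 2*p*q*(x\<bullet>y) + p*p*(y\<bullet>y)"
    unfolding power2_norm_eq_inner by (simp add: inner_add_left inner_add_right inner_commute[of y x] power2_eq_square algebra_simps)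
  have 2: "(norm (x - y))\<^sup>2 = x\<bullet>x - 2*(x\<bullet>y) + y\<bullet>y"
    unfolding power2_norm_eq_inner by (simp add: inner_diff_left inner_diff_right inner_commute[of y x])
  have q: "q = 1 - p" using assms by simp
  show ?thesis unfolding 1 2 unfolding power2_norm_eq_inner q by (simp add: algebra_simps)
qed
lemma nle: "norm (x::'a::real_normed_vector) \<le> B * norm v \<Longrightarrow> B \<le> 1 \<Longrightarrow> norm x \<le> norm v"
proof -
  assume a: "norm x \<le> B * norm v" "B \<le> 1"
  have "B * norm v \<le> 1 * norm v" by (rule mult_right_mono[OF a(2) norm_ge_zero])
  thus ?thesis using a(1) by simp
qed
lemma mv_scaleR: "((c::real) *\<^sub>R (A::complex^'n^'n)) *v x = c *\<^sub>R (A *v x)"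
  by (simp add: vec_eq_iff matrix_vector_mult_def scaleR_sum_right)

lemma norm_smult_vec: "norm ((l::complex) *s (v::complex^'n)) = cmod l * norm v"
  by (simp add: norm_vec_def norm_mult L2_set_right_distrib)

theorem mainTheorem4:
  fixes A B :: "complex^'n^'n" and \<rho>1 :: "complex^'n" and p q :: real
  assumes "onorm (\<lambda>x. A *v x) \<le> 1" and "onorm (\<lambda>x. B *v x) \<le> 1"
    and "is_eigenvalue A 1" and "is_eigenvalue B 1"
    and "\<rho>1 \<noteq> 0" and "adjoint_mat A *v \<rho>1 = \<rho>1" and "adjoint_mat B *v \<rho>1 = \<rho>1"
    and "0 < p" and "p < 1" and "0 < q" and "q < 1" and "p + q = 1"
    and "\<forall>l. is_eigenvalue B l \<and> cmod l = 1 \<longrightarrow> l = 1"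
  shows "\<forall>l. is_eigenvalue (q *\<^sub>R A + p *\<^sub>R B) l \<and> cmod l = 1 \<longrightarrow> l = 1"
proof (intro allI impI)
  fix l assume h: "is_eigenvalue (q *\<^sub>R A + p *\<^sub>R B) l \<and> cmod l = 1"
  then obtain v where v: "v \<noteq> 0" "(q *\<^sub>R A + p *\<^sub>R B) *v v = l *s v"
    unfolding is_eigenvalue_def by blast
  define x where "x = A *v v"
  define y where "y = B *v v"
  have bA: "bounded_linear (\<lambda>x. A *v x)" and bB: "bounded_linear (\<lambda>x. B *v x)" by simp_all
  have nx: "norm x \<le> norm v"
    using nle[OF onorm[OF bA, of v] assms(1)] unfolding x_def .
  have ny: "norm y \<le> norm v"
    using nle[OF onorm[OF bB, of v] assms(2)] unfolding y_def .
  have L: "q *\<^sub>R x + p *\<^sub>R y = l *s v"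
    using v(2) unfolding x_def y_def by (simp add: matrix_vector_mult_add_rdistrib mv_scaleR)
  have nL: "norm (q *\<^sub>R x + p *\<^sub>R y) = norm v" using L h by (simp add: norm_smult_vec)
  have E: "(norm v)\<^sup>2 = q * (norm x)\<^sup>2 + p * (norm y)\<^sup>2 - p * q * (norm (x - y))\<^sup>2"
    using convex_id[OF assms(12), of x y] nL by simp
  have a: "(norm x)\<^sup>2 \<le> (norm v)\<^sup>2" "(norm y)\<^sup>2 \<le> (norm v)\<^sup>2"
    using nx ny by (simp_all add: power_mono)
  have b: "q * (norm x)\<^sup>2 \<le> q * (norm v)\<^sup>2" "p * (norm y)\<^sup>2 \<le> p * (norm v)\<^sup>2"
    using a assms(8,10) by (simp_all add: mult_left_mono)
  have c: "q * (norm v)\<^sup>2 + p * (norm v)\<^sup>2 = (norm v)\<^sup>2"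
    using assms(12) by (metis distrib_right mult_1 add.commute)
  have f1: "p * q * (norm (x - y))\<^sup>2 \<le> 0" using E b c by linarith
  have f2: "p * q > 0" using assms(8,10) by simp
  have "(norm (x - y))\<^sup>2 \<le> 0"
  proof (rule ccontr)
    assume "\<not> (norm (x - y))\<^sup>2 \<le> 0"
    hence "(norm (x - y))\<^sup>2 > 0" by simp
    hence "p * q * (norm (x - y))\<^sup>2 > 0" by (rule mult_pos_pos[OF f2])
    thus False using f1 by linarith
  qed
  hence "norm (x - y) = 0" by simp
  hence "x = y" by simp
  hence "q *\<^sub>R x + p *\<^sub>R y = (q + p) *\<^sub>R y" by (simp add: scaleR_add_left)
  hence "q *\<^sub>R x + p *\<^sub>R y = y" using assms(12) by (simp add: add.commute)
  hence "B *v v = l *s v" using L unfolding y_def by simp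
  hence "is_eigenvalue B l" using v(1) unfolding is_eigenvalue_def by blast
  thus "l = 1" using assms(13) h by blast
qed
end
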